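(* Let $h,n,k\geq2$ be integers with $k\leq n!$. Then $\{V\times\{id\}: V\in\mathrm{BGR}_h(k)\}\subseteq\mathrm{SPFAG}_h(n)$. If $k=n=2$, equality holds: $\{V\times\{id\}: V\in\mathrm{BGR}_h(2)\}=\mathrm{SPFAG}_h(2)$, and consequently $\{V\times\{id\}: V\in\bigcup_{h\geq2}\mathrm{BGR}_h(2)\}=\bigcup_{h\geq2}\mathrm{SPFAG}_h(2)$.
   Context: A $k$-valued Boolean function is a function $f:\{0,1\}^h\to\{0,\dots,k-1\}$. For $\varphi\in S_h$ and $x\in\{0,1\}^h$, $x^\varphi=(x_{\varphi^{-1}(1)},\dots,x_{\varphi^{-1}(h)})$; the invariance group of $f$ is $S(f)=\{\varphi\in S_h: f(x^\varphi)=f(x)\ \forall x\}$; $\mathrm{BGR}_h(k)=\{S(f): f \text{ a } k\text{-valued Boolean function on }\{0,1\}^h\}$. Permutations compose as $(\sigma\tau)(x)=\sigma(\tau(x))$. Let $G=S_h\times S_n$ and $\mathcal{P}=(S_n)^h$ (preference profiles), with $G$ acting by $(p^{(\varphi,\psi)})_i=\psi\,p_{\varphi^{-1}(i)}$. A social preference function (SPF) is any $F:\mathcal{P}\to S_n$; $G(F)=\{(\varphi,\psi)\in G: F(p^{(\varphi,\psi)})=\psi F(p)\ \forall p\}$ and $G_1(F)=G(F)\cap(S_h\times\{id\})$. $\mathrm{SPFAG}_h(n)$ is the set of subgroups $U\leq S_h\times\{id\}$ with $U=G_1(F)$ for some SPF $F$ on $(S_n)^h$. *)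

theory Defs
  imports "HOL-Combinatorics.Permutations"
begin

(* Permutations of {1..m} are represented as functions nat => nat with  p permutes {1..m}
   (identity outside {1..m}).  Composition is function composition: (s o t) x = s (t x). *)

definition Sym :: "nat \<Rightarrow> (nat \<Rightarrow> nat) set" where
  "Sym m = {p. p permutes {1..m}}"

definition bool_vecs :: "nat \<Rightarrow> (nat \<Rightarrow> bool) set" where
  "bool_vecs h = {x. \<forall>i. i \<notin> {1..h} \<longrightarrow> \<not> x i}"

definition vperm :: "(nat \<Rightarrow> bool) \<Rightarrow> (nat \<Rightarrow> nat) \<Rightarrow> (nat \<Rightarrow> bool)" where
  "vperm x \<phi> = (\<lambda>i. x (inv \<phi> i))"

definition kvalued :: "nat \<Rightarrow> nat \<Rightarrow> ((nat \<Rightarrow> bool) \<Rightarrow> nat) \<Rightarrow> bool" where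
  "kvalued h k f \<longleftrightarrow> (\<forall>x\<in>bool_vecs h. f x < k)"

definition inv_group :: "nat \<Rightarrow> ((nat \<Rightarrow> bool) \<Rightarrow> nat) \<Rightarrow> (nat \<Rightarrow> nat) set" where
  "inv_group h f = {\<phi> \<in> Sym h. \<forall>x\<in>bool_vecs h. f (vperm x \<phi>) = f x}"

definition BGR :: "nat \<Rightarrow> nat \<Rightarrow> (nat \<Rightarrow> nat) set set" where
  "BGR h k = {inv_group h f | f. kvalued h k f}"

definition profiles :: "nat \<Rightarrow> nat \<Rightarrow> (nat \<Rightarrow> nat \<Rightarrow> nat) set" where
  "profiles h n = {p. (\<forall>i\<in>{1..h}. p i \<in> Sym n) \<and> (\<forall>i. i \<notin> {1..h} \<longrightarrow> p i = id)}"

definition pact :: "nat \<Rightarrow> (nat \<Rightarrow> nat \<Rightarrow> nat) \<Rightarrow> (nat \<Rightarrow> nat) \<Rightarrow> (nat \<Rightarrow> nat) \<Rightarrow> (nat \<Rightarrow> nat \<Rightarrow> nat)" where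
  "pact h p \<phi> \<psi> = (\<lambda>i. if i \<in> {1..h} then \<psi> \<circ> p (inv \<phi> i) else id)"

definition SPF :: "nat \<Rightarrow> nat \<Rightarrow> ((nat \<Rightarrow> nat \<Rightarrow> nat) \<Rightarrow> (nat \<Rightarrow> nat)) \<Rightarrow> bool" where
  "SPF h n F \<longleftrightarrow> (\<forall>p\<in>profiles h n. F p \<in> Sym n)"

definition Ggrp :: "nat \<Rightarrow> nat \<Rightarrow> ((nat \<Rightarrow> nat \<Rightarrow> nat) \<Rightarrow> (nat \<Rightarrow> nat)) \<Rightarrow> ((nat \<Rightarrow> nat) \<times> (nat \<Rightarrow> nat)) set" where
  "Ggrp h n F = {(\<phi>, \<psi>) \<in> Sym h \<times> Sym n. \<forall>p\<in>profiles h n. F (pact h p \<phi> \<psi>) = \<psi> \<circ> F p}"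

definition G1 :: "nat \<Rightarrow> nat \<Rightarrow> ((nat \<Rightarrow> nat \<Rightarrow> nat) \<Rightarrow> (nat \<Rightarrow> nat)) \<Rightarrow> ((nat \<Rightarrow> nat) \<times> (nat \<Rightarrow> nat)) set" where
  "G1 h n F = Ggrp h n F \<inter> (Sym h \<times> {id})"

definition SPFAG :: "nat \<Rightarrow> nat \<Rightarrow> ((nat \<Rightarrow> nat) \<times> (nat \<Rightarrow> nat)) set set" where
  "SPFAG h n = {G1 h n F | F. SPF h n F}"

end

theory Submission
  imports Defs
begin

lemma id_Sym: "id \<in> Sym n"
  by (simp add: Sym_def)

lemma inv_in: "\<phi> \<in> Sym h \<Longrightarrow> i \<in> {1..h} \<Longrightarrow> inv \<phi> i \<in> {1..h}"
proof -
  assume a: "\<phi> \<in> Sym h" "i \<in> {1..h}"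
  have "inv \<phi> permutes {1..h}" using a(1) unfolding Sym_def by (simp add: permutes_inv)
  then show ?thesis using a(2) by (simp only: permutes_in_image)
qed

lemma inv_out: "\<phi> \<in> Sym h \<Longrightarrow> i \<notin> {1..h} \<Longrightarrow> inv \<phi> i = i"
proof -
  assume a: "\<phi> \<in> Sym h" "i \<notin> {1..h}"
  have "inv \<phi> permutes {1..h}" using a(1) unfolding Sym_def by (simp add: permutes_inv)
  then show ?thesis using a(2) by (rule permutes_not_in)
qed

lemma G1_char:
  "G1 h n F = {\<phi> \<in> Sym h. \<forall>p\<in>profiles h n. F (pact h p \<phi> id) = F p} \<times> {id}"
  unfolding G1_def Ggrp_def using id_Sym by auto

lemma vperm_bool: "\<phi> \<in> Sym h \<Longrightarrow> x \<in> bool_vecs h \<Longrightarrow> vperm x \<phi> \<in> bool_vecs h"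
  unfolding bool_vecs_def vperm_def using inv_out by fastforce

definition enc :: "nat \<Rightarrow> (nat \<Rightarrow> nat) \<Rightarrow> (nat \<Rightarrow> nat) \<Rightarrow> (nat \<Rightarrow> bool) \<Rightarrow> (nat \<Rightarrow> nat \<Rightarrow> nat)" where
  "enc h a b x = (\<lambda>i. if i \<in> {1..h} then (if x i then a else b) else id)"

definition dec :: "nat \<Rightarrow> (nat \<Rightarrow> nat) \<Rightarrow> (nat \<Rightarrow> nat \<Rightarrow> nat) \<Rightarrow> (nat \<Rightarrow> bool)" where
  "dec h a p = (\<lambda>i. i \<in> {1..h} \<and> p i = a)"

lemma enc_prof: "a \<in> Sym n \<Longrightarrow> b \<in> Sym n \<Longrightarrow> enc h a b x \<in> profiles h n"
  unfolding enc_def profiles_def by auto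

lemma dec_enc: "a \<noteq> b \<Longrightarrow> x \<in> bool_vecs h \<Longrightarrow> dec h a (enc h a b x) = x"
  unfolding enc_def dec_def bool_vecs_def by (rule ext) auto

lemma pact_enc: "\<phi> \<in> Sym h \<Longrightarrow> pact h (enc h a b x) \<phi> id = enc h a b (vperm x \<phi>)"
  unfolding enc_def pact_def vperm_def using inv_in by (rule_tac ext) auto

lemma enc_image_iff:
  assumes "p \<in> profiles h n" "a \<noteq> b"
  shows "p \<in> enc h a b ` bool_vecs h \<longleftrightarrow> (\<forall>i\<in>{1..h}. p i \<in> {a,b})"
proof
  assume "p \<in> enc h a b ` bool_vecs h" then show "\<forall>i\<in>{1..h}. p i \<in> {a,b}"
    unfolding enc_def by auto
next
  assume H: "\<forall>i\<in>{1..h}. p i \<in> {a,b}"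
  have "p = enc h a b (dec h a p)"
    using H assms(1) unfolding enc_def dec_def profiles_def by (rule_tac ext) auto
  moreover have "dec h a p \<in> bool_vecs h" unfolding dec_def bool_vecs_def by auto
  ultimately show "p \<in> enc h a b ` bool_vecs h" by blast
qed

lemma pact_prof: "\<phi> \<in> Sym h \<Longrightarrow> p \<in> profiles h n \<Longrightarrow> pact h p \<phi> id \<in> profiles h n"
  unfolding profiles_def pact_def using inv_in by auto

lemma pact_image_iff:
  assumes "p \<in> profiles h n" "a \<noteq> b" "\<phi> \<in> Sym h"
  shows "pact h p \<phi> id \<in> enc h a b ` bool_vecs h \<longleftrightarrow> p \<in> enc h a b ` bool_vecs h"
proof -
  have "(\<forall>i\<in>{1..h}. pact h p \<phi> id i \<in> {a,b}) \<longleftrightarrow> (\<forall>i\<in>{1..h}. p i \<in> {a,b})"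
  proof
    assume H: "\<forall>i\<in>{1..h}. pact h p \<phi> id i \<in> {a,b}"
    show "\<forall>i\<in>{1..h}. p i \<in> {a,b}"
    proof
      fix j assume j: "j \<in> {1..h}"
      have pp: "\<phi> permutes {1..h}" using assms(3) unfolding Sym_def by simp
      have pj: "\<phi> j \<in> {1..h}" using permutes_in_image[OF pp] j by blast
      have "inv \<phi> (\<phi> j) = j" using assms(3) unfolding Sym_def by (simp add: permutes_inverses)
      then show "p j \<in> {a,b}" using H pj unfolding pact_def by force
    qed
  next
    assume H: "\<forall>i\<in>{1..h}. p i \<in> {a,b}"
    then show "\<forall>i\<in>{1..h}. pact h p \<phi> id i \<in> {a,b}"
      unfolding pact_def using inv_in[OF assms(3)] by auto
  qed
  then show ?thesis using enc_image_iff assms pact_prof by metis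
qed

lemma part1:
  assumes "n \<ge> 2" "k \<le> fact n"
  shows "(\<lambda>V. V \<times> {id}) ` BGR h k \<subseteq> SPFAG h n"
proof
  fix W :: "((nat \<Rightarrow> nat) \<times> (nat \<Rightarrow> nat)) set" assume "W \<in> (\<lambda>V. V \<times> {id}) ` BGR h k"
  then obtain f where kf: "kvalued h k f" and W: "W = inv_group h f \<times> {id}"
    unfolding BGR_def by auto
  have fin: "finite (Sym n)" unfolding Sym_def by (simp add: finite_permutations)
  have "card (Sym n) = fact n" unfolding Sym_def by (simp add: card_permutations)
  then obtain g where g: "g ` {..<k} \<subseteq> Sym n" "inj_on g {..<k}"
    using card_le_inj[of "{..<k}" "Sym n"] fin assms by auto
  define a :: "nat \<Rightarrow> nat" where "a = id"
  define b :: "nat \<Rightarrow> nat" where "b = Transposition.transpose 1 2"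
  have a: "a \<in> Sym n" unfolding a_def by (simp add: Sym_def)
  have b: "b \<in> Sym n" unfolding b_def Sym_def mem_Collect_eq using assms by (intro permutes_swap_id) auto
  have ab: "a \<noteq> b" unfolding a_def b_def by (metis id_apply transpose_apply_first numeral_One numeral_eq_iff semiring_norm(85))
  define F where "F p = (if p \<in> enc h a b ` bool_vecs h then g (f (dec h a p)) else id)" for p
  have SPF: "SPF h n F" unfolding SPF_def F_def
  proof (intro ballI)
    fix p assume "p \<in> profiles h n"
    show "(if p \<in> enc h a b ` bool_vecs h then g (f (dec h a p)) else id) \<in> Sym n"
    proof (cases "p \<in> enc h a b ` bool_vecs h")
      case True
      then obtain x where x: "x \<in> bool_vecs h" "p = enc h a b x" by auto
      then have "f (dec h a p) < k" using kf dec_enc[OF ab] unfolding kvalued_def by auto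
      then show ?thesis using True g by auto
    qed (simp add: id_Sym)
  qed
  have Fenc: "F (enc h a b x) = g (f x)" if "x \<in> bool_vecs h" for x
    using that dec_enc[OF ab] unfolding F_def by auto
  have eq: "(\<forall>p\<in>profiles h n. F (pact h p \<phi> id) = F p) \<longleftrightarrow> (\<forall>x\<in>bool_vecs h. f (vperm x \<phi>) = f x)"
    if phi: "\<phi> \<in> Sym h" for \<phi>
  proof
    assume H: "\<forall>p\<in>profiles h n. F (pact h p \<phi> id) = F p"
    show "\<forall>x\<in>bool_vecs h. f (vperm x \<phi>) = f x"
    proof
      fix x assume x: "x \<in> bool_vecs h"
      have "g (f (vperm x \<phi>)) = g (f x)"
        using H enc_prof[OF a b] pact_enc[OF phi] Fenc x vperm_bool[OF phi x] by metis
      moreover have "f (vperm x \<phi>) < k" "f x < k"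
        using kf x vperm_bool[OF phi x] unfolding kvalued_def by auto
      ultimately show "f (vperm x \<phi>) = f x" using g(2) by (auto dest: inj_onD)
    qed
  next
    assume H: "\<forall>x\<in>bool_vecs h. f (vperm x \<phi>) = f x"
    show "\<forall>p\<in>profiles h n. F (pact h p \<phi> id) = F p"
    proof
      fix p assume p: "p \<in> profiles h n"
      show "F (pact h p \<phi> id) = F p"
      proof (cases "p \<in> enc h a b ` bool_vecs h")
        case True
        then obtain x where x: "x \<in> bool_vecs h" "p = enc h a b x" by auto
        then show ?thesis using pact_enc[OF phi] Fenc H vperm_bool[OF phi x(1)] by metis
      next
        case False
        then show ?thesis using pact_image_iff[OF p ab phi] unfolding F_def by auto
      qed
    qed
  qed
  have "G1 h n F = W" unfolding G1_char W inv_group_def using eq by auto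
  then show "W \<in> SPFAG h n" using SPF unfolding SPFAG_def by auto
qed

lemma sym2:
  assumes "p \<in> Sym 2"
  shows "p = id \<or> p = Transposition.transpose 1 2"
proof -
  have pp: "p permutes {1..2}" using assms unfolding Sym_def by simp
  have S: "{1..2::nat} = {1,2}" by auto
  have p1: "p 1 \<in> {1,2}" "p 2 \<in> {1,2}" using permutes_in_image[OF pp] S by auto
  have ne: "p 1 \<noteq> p 2" using permutes_inj[OF pp] by (metis inj_eq numeral_One numeral_eq_iff semiring_norm(85))
  have out: "p x = x" if "x \<noteq> 1" "x \<noteq> 2" for x using permutes_not_in[OF pp] S that by auto
  show ?thesis
  proof (cases "p 1 = 1")
    case True
    then have "p 2 = 2" using p1 ne by auto
    then have "p = id" using True out by (intro ext) (metis id_apply)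
    then show ?thesis by simp
  next
    case False
    then have "p 1 = 2" "p 2 = 1" using p1 ne by auto
    then have "p = Transposition.transpose 1 2" using out
      by (intro ext) (auto simp: transpose_def)
    then show ?thesis by simp
  qed
qed

lemma part2: "SPFAG h 2 \<subseteq> (\<lambda>V. V \<times> {id}) ` BGR h 2"
proof
  fix W :: "((nat \<Rightarrow> nat) \<times> (nat \<Rightarrow> nat)) set" assume "W \<in> SPFAG h 2"
  then obtain F where SPF: "SPF h 2 F" and W: "W = G1 h 2 F" unfolding SPFAG_def by auto
  define a :: "nat \<Rightarrow> nat" where "a = id"
  define b :: "nat \<Rightarrow> nat" where "b = Transposition.transpose 1 2"
  have a: "a \<in> Sym 2" unfolding a_def by (simp add: Sym_def)
  have b: "b \<in> Sym 2" unfolding b_def Sym_def mem_Collect_eq by (intro permutes_swap_id) auto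
  have ab: "a \<noteq> b" unfolding a_def b_def by (metis id_apply transpose_apply_first numeral_One numeral_eq_iff semiring_norm(85))
  define f :: "(nat \<Rightarrow> bool) \<Rightarrow> nat" where "f x = (if F (enc h a b x) = id then 0 else 1)" for x
  have kf: "kvalued h 2 f" unfolding kvalued_def f_def by auto
  have allenc: "p \<in> enc h a b ` bool_vecs h" if p: "p \<in> profiles h 2" for p
  proof -
    have "\<forall>i\<in>{1..h}. p i \<in> {a,b}" using p sym2 unfolding profiles_def a_def b_def by blast
    then show ?thesis using enc_image_iff[OF p ab] by blast
  qed
  have F2: "F (enc h a b x) = a \<or> F (enc h a b x) = b" for x
    using SPF enc_prof[OF a b] sym2 unfolding SPF_def a_def b_def by blast
  have eq: "(\<forall>p\<in>profiles h 2. F (pact h p \<phi> id) = F p) \<longleftrightarrow> (\<forall>x\<in>bool_vecs h. f (vperm x \<phi>) = f x)"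
    if phi: "\<phi> \<in> Sym h" for \<phi>
  proof
    assume H: "\<forall>p\<in>profiles h 2. F (pact h p \<phi> id) = F p"
    show "\<forall>x\<in>bool_vecs h. f (vperm x \<phi>) = f x"
    proof
      fix x assume x: "x \<in> bool_vecs h"
      have "F (enc h a b (vperm x \<phi>)) = F (enc h a b x)"
        using H[rule_format, OF enc_prof[OF a b, of h x]] by (simp add: pact_enc[OF phi])
      then show "f (vperm x \<phi>) = f x" unfolding f_def by simp
    qed
  next
    assume H: "\<forall>x\<in>bool_vecs h. f (vperm x \<phi>) = f x"
    show "\<forall>p\<in>profiles h 2. F (pact h p \<phi> id) = F p"
    proof
      fix p assume p: "p \<in> profiles h 2"
      then obtain x where x: "x \<in> bool_vecs h" "p = enc h a b x" using allenc by blast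
      have "f (vperm x \<phi>) = f x" using H x by blast
      then have "F (enc h a b (vperm x \<phi>)) = F (enc h a b x)"
        using F2[of x] F2[of "vperm x \<phi>"] ab unfolding f_def a_def
        by (auto split: if_splits)
      then show "F (pact h p \<phi> id) = F p" using x(2) by (simp add: pact_enc[OF phi])
    qed
  qed
  have "W = inv_group h f \<times> {id}" unfolding G1_char W inv_group_def using eq by auto
  then show "W \<in> (\<lambda>V. V \<times> {id}) ` BGR h 2" using kf unfolding BGR_def by auto
qed

lemma part2eq: "(\<lambda>V. V \<times> {id}) ` BGR h 2 = SPFAG h 2"
proof (rule subset_antisym)
  have "(2::nat) \<le> fact 2" by (simp add: fact_numeral)
  then show "(\<lambda>V. V \<times> {id}) ` BGR h 2 \<subseteq> SPFAG h 2" using part1[of 2 2 h] by simp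
qed (rule part2)

theorem mainTheorem19:
  fixes h n k :: nat
  assumes "h \<ge> 2" and "n \<ge> 2" and "k \<ge> 2" and "k \<le> fact n"
  shows "(\<lambda>V. V \<times> {id}) ` BGR h k \<subseteq> SPFAG h n
     \<and> (\<lambda>V. V \<times> {id}) ` BGR h 2 = SPFAG h 2
     \<and> (\<lambda>V. V \<times> {id}) ` (\<Union>h'\<in>{2..}. BGR h' 2) = (\<Union>h'\<in>{2..}. SPFAG h' 2)"
proof (intro conjI)
  show "(\<lambda>V. V \<times> {id}) ` BGR h k \<subseteq> SPFAG h n" by (rule part1[OF assms(2,4)])
  show "(\<lambda>V. V \<times> {id}) ` BGR h 2 = SPFAG h 2" by (rule part2eq)
  show "(\<lambda>V. V \<times> {id}) ` (\<Union>h'\<in>{2..}. BGR h' 2) = (\<Union>h'\<in>{2..}. SPFAG h' 2)"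
    unfolding image_UN using part2eq by (intro SUP_cong) auto
qed

end
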